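(* Let $\alpha\in(0,2)$. For every $\lambda>0$ there exist $\mathcal C_0,\mathcal C_1>0$ such that $\mathcal C_0\delta^{\alpha/2}\le q(\delta,\lambda)\le\mathcal C_1\delta^{\alpha/2}$ for all sufficiently small $\delta>0$.
   Context: $B_\alpha$ is fractional Brownian motion with $\mathrm{Cov}(B_\alpha(t),B_\alpha(s))=\frac{|t|^\alpha+|s|^\alpha-|t-s|^\alpha}{2}$; $Z_\alpha(t)=\sqrt2B_\alpha(t)-|t|^\alpha$; $\eta$ is a standard exponential random variable independent of $Z_\alpha$. For $\delta,\lambda>0$, $q(\delta,\lambda)=\mathbb P\big(Z_\alpha(-\delta)+\lambda^{-1}\eta<0,\ Z_\alpha(\delta)+\lambda^{-1}\eta<0\big)$. *)

theory Defs
  imports "HOL-Probability.Probability"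
begin

definition fbm_cov :: "real \<Rightarrow> real \<Rightarrow> real \<Rightarrow> real" where
  "fbm_cov \<alpha> t s = (\<bar>t\<bar> powr \<alpha> + \<bar>s\<bar> powr \<alpha> - \<bar>t - s\<bar> powr \<alpha>) / 2"

definition centered_gaussian :: "'a measure \<Rightarrow> ('a \<Rightarrow> real) \<Rightarrow> real \<Rightarrow> bool" where
  "centered_gaussian M X v \<longleftrightarrow>
     X \<in> borel_measurable M \<and>
     ((v = 0 \<and> (AE \<omega> in M. X \<omega> = 0)) \<or>
      (v > 0 \<and> distributed M lborel X (normal_density 0 (sqrt v))))"

definition is_fBm :: "'a measure \<Rightarrow> real \<Rightarrow> (real \<Rightarrow> 'a \<Rightarrow> real) \<Rightarrow> bool" where
  "is_fBm M \<alpha> B \<longleftrightarrow>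
     (\<forall>t. B t \<in> borel_measurable M) \<and>
     (\<forall>T c. finite T \<longrightarrow>
        centered_gaussian M (\<lambda>\<omega>. \<Sum>t\<in>T. c t * B t \<omega>)
          (\<Sum>t\<in>T. \<Sum>s\<in>T. c t * c s * fbm_cov \<alpha> t s))"

definition Zproc :: "real \<Rightarrow> (real \<Rightarrow> 'a \<Rightarrow> real) \<Rightarrow> real \<Rightarrow> 'a \<Rightarrow> real" where
  "Zproc \<alpha> B t \<omega> = sqrt 2 * B t \<omega> - \<bar>t\<bar> powr \<alpha>"

definition qprob :: "'a measure \<Rightarrow> real \<Rightarrow> (real \<Rightarrow> 'a \<Rightarrow> real) \<Rightarrow> ('a \<Rightarrow> real)
    \<Rightarrow> real \<Rightarrow> real \<Rightarrow> real" where
  "qprob M \<alpha> B \<eta> \<delta> lam = measure M {\<omega> \<in> space M.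
      Zproc \<alpha> B (-\<delta>) \<omega> + \<eta> \<omega> / lam < 0 \<and> Zproc \<alpha> B \<delta> \<omega> + \<eta> \<omega> / lam < 0}"

end

theory Submission
  imports Defs
begin


lemma normal_mgf:
  assumes s: "\<sigma> > 0"
  shows "integrable lborel (\<lambda>x. normal_density 0 \<sigma> x * exp x)"
    and "(\<integral>x. normal_density 0 \<sigma> x * exp x \<partial>lborel) = exp (\<sigma>\<^sup>2/2)"
proof -
  have eq: "(\<lambda>x. normal_density 0 \<sigma> x * exp x) = (\<lambda>x. exp (\<sigma>\<^sup>2/2) * normal_density (\<sigma>\<^sup>2) \<sigma> x)"
  proof
    fix x
    have "-(x - 0)\<^sup>2/ (2 * \<sigma>\<^sup>2) + x = \<sigma>\<^sup>2/2 + (-(x - \<sigma>\<^sup>2)\<^sup>2/ (2 * \<sigma>\<^sup>2))"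
      using s by (simp add: field_simps power2_eq_square)
    then have "exp (-(x - 0)\<^sup>2/ (2 * \<sigma>\<^sup>2)) * exp x = exp (\<sigma>\<^sup>2/2) * exp (-(x - \<sigma>\<^sup>2)\<^sup>2/ (2 * \<sigma>\<^sup>2))"
      by (metis exp_add)
    then show "normal_density 0 \<sigma> x * exp x = exp (\<sigma>\<^sup>2/2) * normal_density (\<sigma>\<^sup>2) \<sigma> x"
      unfolding normal_density_def by (simp add: mult_ac)
  qed
  show "integrable lborel (\<lambda>x. normal_density 0 \<sigma> x * exp x)"
    unfolding eq using integrable_normal_density[OF s] by simp
  show "(\<integral>x. normal_density 0 \<sigma> x * exp x \<partial>lborel) = exp (\<sigma>\<^sup>2/2)"
    unfolding eq using integral_normal_density[OF s] by simp
qed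

lemma cg_mgf:
  assumes P: "prob_space M" and g: "centered_gaussian M L v"
  shows "integrable M (\<lambda>\<omega>. exp (L \<omega>))" and "(\<integral>\<omega>. exp (L \<omega>) \<partial>M) = exp (v/2)"
proof -
  interpret prob_space M by fact
  have Lm[measurable]: "L \<in> borel_measurable M" using g unfolding centered_gaussian_def by auto
  have "integrable M (\<lambda>\<omega>. exp (L \<omega>)) \<and> (\<integral>\<omega>. exp (L \<omega>) \<partial>M) = exp (v/2)"
  proof (cases "v = 0 \<and> (AE \<omega> in M. L \<omega> = 0)")
    case True
    then have ae: "AE \<omega> in M. exp (L \<omega>) = 1" by auto
    have "integrable M (\<lambda>\<omega>. exp (L \<omega>))"
      using integrable_cong_AE[OF _ _ ae] by simp
    moreover have "(\<integral>\<omega>. exp (L \<omega>) \<partial>M) = 1"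
      using integral_cong_AE[OF _ _ ae] prob_space by simp
    ultimately show ?thesis using True by simp
  next
    case False
    then have v: "v > 0" and D: "distributed M lborel L (normal_density 0 (sqrt v))"
      using g unfolding centered_gaussian_def by auto
    have s: "sqrt v > 0" using v by simp
    have "integrable M (\<lambda>\<omega>. exp (L \<omega>))"
      using distributed_integrable[OF D, of exp] normal_mgf(1)[OF s] by simp
    moreover have "(\<integral>\<omega>. exp (L \<omega>) \<partial>M) = exp (v/2)"
      using distributed_integral[OF D, of exp] normal_mgf(2)[OF s] v by simp
    ultimately show ?thesis by simp
  qed
  then show "integrable M (\<lambda>\<omega>. exp (L \<omega>))" and "(\<integral>\<omega>. exp (L \<omega>) \<partial>M) = exp (v/2)" by auto
qed



lemma quadrant_lower:
  fixes X Y :: "'a \<Rightarrow> real"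
  assumes P: "prob_space M"
    and Xm[measurable]: "X \<in> borel_measurable M" and Ym[measurable]: "Y \<in> borel_measurable M"
    and mgf: "\<And>u v. integrable M (\<lambda>\<omega>. exp (u * X \<omega> + v * Y \<omega>)) \<and>
                (\<integral>\<omega>. exp (u * X \<omega> + v * Y \<omega>) \<partial>M) = exp ((u\<^sup>2 + v\<^sup>2 + 2 * r * u * v)/2)"
    and a: "1 + r > 0"
  shows "exp (-32/(1+r))/8 \<le> measure M {\<omega>\<in>space M. X \<omega> < -1 \<and> Y \<omega> < -1}"
proof -
  interpret prob_space M by fact
  define a where "a = 1 + r"
  have a0: "a > 0" using a a_def by simp
  define t where "t = 4 / a"
  have ta: "t * a = 4" using a0 t_def by simp
  have t0: "t > 0" using a0 t_def by simp
  define Q where "Q = {\<omega>\<in>space M. X \<omega> < -1 \<and> Y \<omega> < -1}"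
  have Qm: "Q \<in> sets M" unfolding Q_def by measurable
  define mZ where "mZ = exp (t\<^sup>2 * a)"
  define mZ2 where "mZ2 = exp (4 * t\<^sup>2 * a)"
  define K where "K = 4 * mZ2 / mZ"
  have mZ0: "mZ > 0" and mZ20: "mZ2 > 0" unfolding mZ_def mZ2_def by auto
  have K0: "K > 0" unfolding K_def using mZ0 mZ20 by simp
  let ?Z = "\<lambda>\<omega>. exp ((-t) * X \<omega> + (-t) * Y \<omega>)"
  let ?Z2 = "\<lambda>\<omega>. exp ((-2*t) * X \<omega> + (-2*t) * Y \<omega>)"
  let ?E1 = "\<lambda>\<omega>. exp ((3-t) * X \<omega> + (-t) * Y \<omega>)"
  let ?E2 = "\<lambda>\<omega>. exp ((-t) * X \<omega> + (3-t) * Y \<omega>)"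
  have iZ: "integrable M ?Z" and iZ2: "integrable M ?Z2" and iE1: "integrable M ?E1" and iE2: "integrable M ?E2"
    using mgf by blast+
  have eZ: "(\<integral>\<omega>. ?Z \<omega> \<partial>M) = mZ"
    using mgf[of "-t" "-t"] unfolding mZ_def a_def by (simp add: power2_eq_square algebra_simps)
  have eZ2: "(\<integral>\<omega>. ?Z2 \<omega> \<partial>M) = mZ2"
    using mgf[of "-2*t" "-2*t"] unfolding mZ2_def a_def by (simp add: power2_eq_square algebra_simps)
  have "(\<integral>\<omega>. ?E1 \<omega> \<partial>M) = exp (t\<^sup>2 * a - 3 * (t * a) + 9/2)"
  proof -
    have "((3-t)\<^sup>2 + (-t)\<^sup>2 + 2 * r * (3-t) * (-t))/2 = t\<^sup>2 * a - 3 * (t * a) + 9/2"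
      unfolding a_def by (simp add: power2_eq_square field_simps)
    then show ?thesis using mgf[of "3-t" "-t"] by simp
  qed
  then have eE1: "(\<integral>\<omega>. ?E1 \<omega> \<partial>M) = mZ * exp (-15/2)"
    unfolding ta mZ_def by (simp add: exp_add[symmetric])
  have "(\<integral>\<omega>. ?E2 \<omega> \<partial>M) = exp (t\<^sup>2 * a - 3 * (t * a) + 9/2)"
  proof -
    have "((-t)\<^sup>2 + (3-t)\<^sup>2 + 2 * r * (-t) * (3-t))/2 = t\<^sup>2 * a - 3 * (t * a) + 9/2"
      unfolding a_def by (simp add: power2_eq_square field_simps)
    then show ?thesis using mgf[of "-t" "3-t"] by simp
  qed
  then have eE2: "(\<integral>\<omega>. ?E2 \<omega> \<partial>M) = mZ * exp (-15/2)"
    unfolding ta mZ_def by (simp add: exp_add[symmetric])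
  have pw: "?Z \<omega> \<le> K * indicator Q \<omega> + ?Z2 \<omega> / K + exp 3 * ?E1 \<omega> + exp 3 * ?E2 \<omega>"
    if w: "\<omega> \<in> space M" for \<omega>
  proof -
    define e where "e = ?Z \<omega>"
    have e0: "e > 0" unfolding e_def by simp
    have z2: "?Z2 \<omega> = e * e" unfolding e_def by (simp add: exp_add[symmetric] algebra_simps)
    have e1: "exp 3 * ?E1 \<omega> = e * exp (3 * (X \<omega> + 1))" unfolding e_def
      by (simp add: exp_add[symmetric] algebra_simps)
    have e2: "exp 3 * ?E2 \<omega> = e * exp (3 * (Y \<omega> + 1))" unfolding e_def
      by (simp add: exp_add[symmetric] algebra_simps)
    have n1: "0 \<le> exp 3 * ?E1 \<omega>" "0 \<le> exp 3 * ?E2 \<omega>" "0 \<le> ?Z2 \<omega> / K" "0 \<le> K * indicator Q \<omega>"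
      using K0 by auto
    have goal': "e \<le> K * indicator Q \<omega> + e * e / K + exp 3 * ?E1 \<omega> + exp 3 * ?E2 \<omega>"
    proof (cases "\<omega> \<in> Q")
      case True
      have "e \<le> K + e * e / K"
      proof (cases "e \<le> K")
        case True then show ?thesis using e0 K0 by (simp add: add_increasing2)
      next
        case False
        then have "e * e / K \<ge> e" using e0 K0 by (simp add: field_simps)
        then show ?thesis using K0 by linarith
      qed
      moreover have "K * indicator Q \<omega> = K" using True by simp
      ultimately show ?thesis using n1 by linarith
    next
      case False
      then have "X \<omega> \<ge> -1 \<or> Y \<omega> \<ge> -1" using w unfolding Q_def by auto
      then have "e \<le> exp 3 * ?E1 \<omega> \<or> e \<le> exp 3 * ?E2 \<omega>"
        unfolding e1 e2 using e0 by (auto simp: mult_le_cancel_left1)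
      moreover have "0 \<le> e * e / K" using e0 K0 by simp
      ultimately show ?thesis using n1 by linarith
    qed
    show ?thesis unfolding z2 using goal' by (simp only: e_def)
  qed
  have iQ: "integrable M (indicator Q :: 'a \<Rightarrow> real)"
    by (intro integrable_real_indicator Qm) (simp add: less_top[symmetric])
  have iR: "integrable M (\<lambda>\<omega>. K * indicator Q \<omega> + ?Z2 \<omega> / K + exp 3 * ?E1 \<omega> + exp 3 * ?E2 \<omega>)"
    using iZ2 iE1 iE2 iQ by (intro Bochner_Integration.integrable_add integrable_mult_right integrable_divide) auto
  have "mZ \<le> (\<integral>\<omega>. K * indicator Q \<omega> + ?Z2 \<omega> / K + exp 3 * ?E1 \<omega> + exp 3 * ?E2 \<omega> \<partial>M)"
    unfolding eZ[symmetric] by (rule integral_mono[OF iZ iR pw])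
  also have "\<dots> = K * measure M Q + mZ2 / K + exp 3 * (mZ * exp (-15/2)) + exp 3 * (mZ * exp (-15/2))"
    using iZ2 iE1 iE2 iQ Qm eZ2 eE1 eE2
    by (subst Bochner_Integration.integral_add, (auto intro!: Bochner_Integration.integrable_add)[2])+
       (simp add: Qm sets.Int_space_eq2)
  also have "exp 3 * (mZ * exp (-15/2)) = mZ * exp (-9/2)"
    by (simp add: mult.left_commute exp_add[symmetric])
  also have "mZ2 / K = mZ / 4" unfolding K_def using mZ0 mZ20 by simp
  finally have ineq: "mZ \<le> K * measure M Q + mZ / 4 + 2 * mZ * exp (-9/2)" by simp
  have "exp (9/2::real) \<ge> 8"
  proof -
    have h: "exp (9/4::real) \<ge> 1 + 9/4" by (rule exp_ge_add_one_self)
    have "exp (9/2::real) = exp (9/4) * exp (9/4)" by (simp add: exp_add[symmetric])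
    also have "\<dots> \<ge> (1 + 9/4) * (1 + 9/4)" using h by (intro mult_mono) auto
    finally show ?thesis by simp
  qed
  then have "exp (-9/2::real) \<le> 1/8" by (simp add: exp_minus field_simps)
  then have "2 * mZ * exp (-9/2) \<le> mZ / 4" using mZ0 by simp
  with ineq have "mZ / 2 \<le> K * measure M Q" by simp
  then have "mZ / (2 * K) \<le> measure M Q" using K0 by (simp add: field_simps)
  moreover have "mZ / (2 * K) = exp (-32/(1+r))/8"
  proof -
    have "mZ / (2 * K) = mZ * mZ / (8 * mZ2)" unfolding K_def using mZ0 by (simp add: field_simps)
    also have "\<dots> = exp (- 2 * t\<^sup>2 * a) / 8" unfolding mZ_def mZ2_def
      by (simp add: exp_add[symmetric] exp_diff[symmetric] field_simps)
    also have "- 2 * t\<^sup>2 * a = -32/(1+r)" unfolding t_def a_def[symmetric] using a0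
      by (simp add: power2_eq_square field_simps)
    finally show ?thesis .
  qed
  ultimately show ?thesis unfolding Q_def by simp
qed



lemma vimage_set_mem:
  assumes "P \<in> space M \<rightarrow> space N" and "{f \<in> space N. Pr f} \<in> sets N"
  shows "{\<omega>\<in>space M. Pr (P \<omega>)} \<in> sets (vimage_algebra (space M) P N)"
proof -
  have "{\<omega>\<in>space M. Pr (P \<omega>)} = P -` {f \<in> space N. Pr f} \<inter> space M" using assms(1) by auto
  then show ?thesis unfolding sets_vimage_algebra2[OF assms(1)] using assms(2) by blast
qed

lemma indep_set_mono':
  assumes "prob_space M" "prob_space.indep_set M A B" "A' \<subseteq> A" "B' \<subseteq> B"
  shows "prob_space.indep_set M A' B'"
  using assms(2-4) unfolding prob_space.indep_sets2_eq[OF assms(1)] by blast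

lemma indep_var_from:
  assumes P: "prob_space M"
    and ind: "prob_space.indep_set M (sets (vimage_algebra (space M) Pf N)) (sets (vimage_algebra (space M) Qf K))"
    and PN: "Pf \<in> space M \<rightarrow> space N" and QK: "Qf \<in> space M \<rightarrow> space K"
    and h: "h \<in> borel_measurable N" and g: "g \<in> borel_measurable K"
    and hm: "(\<lambda>\<omega>. h (Pf \<omega>)) \<in> borel_measurable M" and gm: "(\<lambda>\<omega>. g (Qf \<omega>)) \<in> borel_measurable M"
  shows "prob_space.indep_var M borel (\<lambda>\<omega>. h (Pf \<omega>)) borel (\<lambda>\<omega>. g (Qf \<omega>))"
proof -
  interpret prob_space M by fact
  have s1: "sigma_sets (space M) {(\<lambda>\<omega>. h (Pf \<omega>)) -` A \<inter> space M | A. A \<in> sets borel}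
      \<subseteq> sets (vimage_algebra (space M) Pf N)"
  proof -
    have "{(\<lambda>\<omega>. h (Pf \<omega>)) -` A \<inter> space M | A. A \<in> sets borel} \<subseteq> sets (vimage_algebra (space M) Pf N)"
    proof
      fix S assume "S \<in> {(\<lambda>\<omega>. h (Pf \<omega>)) -` A \<inter> space M | A. A \<in> sets borel}"
      then obtain A where A: "A \<in> sets borel" "S = (\<lambda>\<omega>. h (Pf \<omega>)) -` A \<inter> space M" by blast
      have "S = Pf -` (h -` A \<inter> space N) \<inter> space M" using A PN by auto
      moreover have "h -` A \<inter> space N \<in> sets N" using measurable_sets[OF h A(1)] .
      ultimately show "S \<in> sets (vimage_algebra (space M) Pf N)"
        unfolding sets_vimage_algebra2[OF PN] by blast
    qed
    then show ?thesis
      using sets.sigma_sets_subset[of _ "vimage_algebra (space M) Pf N"] by (simp add: space_vimage_algebra)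
  qed
  have s2: "sigma_sets (space M) {(\<lambda>\<omega>. g (Qf \<omega>)) -` A \<inter> space M | A. A \<in> sets borel}
      \<subseteq> sets (vimage_algebra (space M) Qf K)"
  proof -
    have "{(\<lambda>\<omega>. g (Qf \<omega>)) -` A \<inter> space M | A. A \<in> sets borel} \<subseteq> sets (vimage_algebra (space M) Qf K)"
    proof
      fix S assume "S \<in> {(\<lambda>\<omega>. g (Qf \<omega>)) -` A \<inter> space M | A. A \<in> sets borel}"
      then obtain A where A: "A \<in> sets borel" "S = (\<lambda>\<omega>. g (Qf \<omega>)) -` A \<inter> space M" by blast
      have "S = Qf -` (g -` A \<inter> space K) \<inter> space M" using A QK by auto
      moreover have "g -` A \<inter> space K \<in> sets K" using measurable_sets[OF g A(1)] .
      ultimately show "S \<in> sets (vimage_algebra (space M) Qf K)"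
        unfolding sets_vimage_algebra2[OF QK] by blast
    qed
    then show ?thesis
      using sets.sigma_sets_subset[of _ "vimage_algebra (space M) Qf K"] by (simp add: space_vimage_algebra)
  qed
  show ?thesis
    unfolding indep_var_eq using hm gm indep_set_mono'[OF P ind s1 s2] by simp
qed

lemma exp_density_integral:
  assumes l: "(0::real) < l"
  shows "integrable lborel (exponential_density l)" and "(\<integral>x. exponential_density l x \<partial>lborel) = 1"
proof -
  have nn: "(\<integral>\<^sup>+x. ennreal (exponential_density l x) \<partial>lborel) = 1"
    using nn_integral_erlang_ith_moment[OF l, of 0 0] by simp
  have nonneg: "\<And>x. 0 \<le> exponential_density l x" using l by (simp add: exponential_density_def)
  show "integrable lborel (exponential_density l)"
    by (rule integrableI_nonneg) (use nn nonneg in auto)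
  show "(\<integral>x. exponential_density l x \<partial>lborel) = 1"
    by (subst integral_eq_nn_integral) (use nn nonneg in auto)
qed

lemma exp_neg_mgf:
  assumes P: "prob_space M" and D: "distributed M lborel \<eta> (exponential_density 1)" and k: "(0::real) \<le> k"
  shows "integrable M (\<lambda>\<omega>. exp (- k * \<eta> \<omega>))" and "(\<integral>\<omega>. exp (- k * \<eta> \<omega>) \<partial>M) = 1 / (1 + k)"
proof -
  have eq: "(\<lambda>x. exponential_density 1 x * exp (- k * x)) = (\<lambda>x. exponential_density (1 + k) x / (1 + k))"
  proof
    fix x show "exponential_density 1 x * exp (- k * x) = exponential_density (1 + k) x / (1 + k)"
    proof (cases "x < 0")
      case False
      have "exp (- x) * exp (- k * x) = exp (- x * (1 + k))" by (simp add: exp_add[symmetric] algebra_simps)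
      then show ?thesis using False k by (simp add: exponential_density_def)
    qed (simp add: exponential_density_def)
  qed
  have l: "0 < 1 + k" using k by simp
  have nonneg: "\<And>x. 0 \<le> exponential_density 1 x" by (simp add: exponential_density_def)
  show "integrable M (\<lambda>\<omega>. exp (- k * \<eta> \<omega>))"
    using distributed_integrable[OF D, of "\<lambda>x. exp (- k * x)"] nonneg exp_density_integral(1)[OF l]
    unfolding eq by simp
  show "(\<integral>\<omega>. exp (- k * \<eta> \<omega>) \<partial>M) = 1 / (1 + k)"
    using distributed_integral[OF D, of "\<lambda>x. exp (- k * x)"] nonneg exp_density_integral(2)[OF l]
    unfolding eq by simp
qed


lemma powr_half_sq:
  assumes "(0::real) < \<delta>" shows "(\<delta> powr (\<alpha>/2))\<^sup>2 = \<delta> powr \<alpha>"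
  using assms by (simp add: power2_eq_square powr_add[symmetric])

lemma eventually_small_powr:
  assumes a: "(0::real) < \<alpha>" and b: "0 < b"
  shows "\<forall>\<^sub>F \<delta> in at_right 0. 0 < \<delta> \<and> \<delta> powr (\<alpha>/2) \<le> b"
proof -
  have "\<forall>\<^sub>F \<delta> in at_right 0. 0 < \<delta> \<and> \<delta> < b powr (2/\<alpha>)"
    using b by (simp add: eventually_at_right_field) (metis powr_gt_zero b order_less_irrefl)
  then show ?thesis
  proof (rule eventually_mono)
    fix \<delta> :: real assume d: "0 < \<delta> \<and> \<delta> < b powr (2/\<alpha>)"
    then have "\<delta> powr (\<alpha>/2) \<le> (b powr (2/\<alpha>)) powr (\<alpha>/2)"
      using a by (intro powr_mono2) auto
    also have "\<dots> = b" using a b by (simp add: powr_powr)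
    finally show "0 < \<delta> \<and> \<delta> powr (\<alpha>/2) \<le> b" using d by simp
  qed
qed

theorem lemma3p5:
  fixes M :: "'a measure" and \<alpha> :: real and B :: "real \<Rightarrow> 'a \<Rightarrow> real" and \<eta> :: "'a \<Rightarrow> real"
  assumes "prob_space M"
    and "0 < \<alpha>" and "\<alpha> < 2"
    and "is_fBm M \<alpha> B"
    and "distributed M lborel \<eta> (exponential_density 1)"
    and "prob_space.indep_set M
           (sets (vimage_algebra (space M) (\<lambda>\<omega> t. B t \<omega>) (PiM UNIV (\<lambda>_. borel))))
           (sets (vimage_algebra (space M) \<eta> borel))"
  shows "\<forall>lam>0. \<exists>C0>0. \<exists>C1>0. \<forall>\<^sub>F \<delta> in at_right 0.
           C0 * \<delta> powr (\<alpha> / 2) \<le> qprob M \<alpha> B \<eta> \<delta> lam \<and>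
           qprob M \<alpha> B \<eta> \<delta> lam \<le> C1 * \<delta> powr (\<alpha> / 2)"
proof (intro allI impI)
  fix lam :: real assume lam: "0 < lam"
  note P = assms(1)
  interpret prob_space M by fact
  note a0 = assms(2) and a2 = assms(3) and fbm = assms(4) and D = assms(5) and ind = assms(6)
  have Bm[measurable]: "\<And>t. B t \<in> borel_measurable M" using fbm unfolding is_fBm_def by auto
  have etam[measurable]: "\<eta> \<in> borel_measurable M" using distributed_measurable[OF D] by simp
  define r where "r = 1 - 2 powr \<alpha> / 2"
  have "2 powr \<alpha> < (2::real) powr 2" using a2 by (intro powr_less_mono) auto
  then have r0: "1 + r > 0" unfolding r_def by simp
  define p where "p = exp (-32/(1+r))/8"
  have p0: "p > 0" unfolding p_def by simp
  define C0 where "C0 = p * (lam * sqrt 2 / 4)"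
  define C1 where "C1 = exp (lam + lam\<^sup>2)"
  define b where "b = min 1 (1 / (lam * sqrt 2))"
  have b0: "b > 0" unfolding b_def using lam by simp
  have PN: "(\<lambda>\<omega> t. B t \<omega>) \<in> space M \<rightarrow> space (PiM UNIV (\<lambda>_. borel :: real measure))"
    by (simp add: space_PiM)
  have etaN: "\<eta> \<in> space M \<rightarrow> space (borel :: real measure)" by simp
  have main: "C0 * \<delta> powr (\<alpha> / 2) \<le> qprob M \<alpha> B \<eta> \<delta> lam \<and>
           qprob M \<alpha> B \<eta> \<delta> lam \<le> C1 * \<delta> powr (\<alpha> / 2)"
    if d0: "0 < \<delta>" and db: "\<delta> powr (\<alpha>/2) \<le> b" for \<delta> :: real
  proof -
    define s where "s = \<delta> powr (\<alpha>/2)"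
    have s0: "s > 0" unfolding s_def using d0 by simp
    have s1: "s \<le> 1" and s2: "lam * sqrt 2 * s \<le> 1"
      using db lam unfolding s_def[symmetric] b_def by (auto simp: field_simps)
    have ss: "s\<^sup>2 = \<delta> powr \<alpha>" unfolding s_def by (rule powr_half_sq[OF d0])
    define X where "X = (\<lambda>\<omega>. B (-\<delta>) \<omega> / s)"
    define Y where "Y = (\<lambda>\<omega>. B \<delta> \<omega> / s)"
    have Xm[measurable]: "X \<in> borel_measurable M" and Ym[measurable]: "Y \<in> borel_measurable M"
      unfolding X_def Y_def by measurable
    have cov1: "fbm_cov \<alpha> (-\<delta>) (-\<delta>) = s\<^sup>2" "fbm_cov \<alpha> \<delta> \<delta> = s\<^sup>2"
      unfolding fbm_cov_def ss using d0 by auto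
    have "\<bar>-\<delta> - \<delta>\<bar> powr \<alpha> = 2 powr \<alpha> * s\<^sup>2" "\<bar>\<delta> - (-\<delta>)\<bar> powr \<alpha> = 2 powr \<alpha> * s\<^sup>2"
      unfolding ss using d0 by (auto simp: powr_mult)
    then have cov2: "fbm_cov \<alpha> (-\<delta>) \<delta> = r * s\<^sup>2" "fbm_cov \<alpha> \<delta> (-\<delta>) = r * s\<^sup>2"
      unfolding fbm_cov_def r_def ss using d0 by (auto simp: field_simps)
    have mgf: "integrable M (\<lambda>\<omega>. exp (u * X \<omega> + v * Y \<omega>)) \<and>
                (\<integral>\<omega>. exp (u * X \<omega> + v * Y \<omega>) \<partial>M) = exp ((u\<^sup>2 + v\<^sup>2 + 2 * r * u * v)/2)" for u v
    proof -
      define c where "c = (\<lambda>t. if t = -\<delta> then u / s else v / s)"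
      have neq: "-\<delta> \<noteq> \<delta>" using d0 by simp
      have cg: "centered_gaussian M (\<lambda>\<omega>. \<Sum>t\<in>{-\<delta>, \<delta>}. c t * B t \<omega>)
          (\<Sum>t\<in>{-\<delta>, \<delta>}. \<Sum>s\<in>{-\<delta>, \<delta>}. c t * c s * fbm_cov \<alpha> t s)"
        using fbm[unfolded is_fBm_def, THEN conjunct2, rule_format, of "{-\<delta>, \<delta>}" c] by simp
      have e1: "(\<Sum>t\<in>{-\<delta>, \<delta>}. c t * B t \<omega>) = u * X \<omega> + v * Y \<omega>" for \<omega>
      proof -
        have "c (-\<delta>) = u / s" "c \<delta> = v / s" using neq unfolding c_def by auto
        then show "(\<Sum>t\<in>{-\<delta>, \<delta>}. c t * B t \<omega>) = u * X \<omega> + v * Y \<omega>"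
          using neq unfolding X_def Y_def by simp
      qed
      have "(\<Sum>t\<in>{-\<delta>, \<delta>}. \<Sum>s\<in>{-\<delta>, \<delta>}. c t * c s * fbm_cov \<alpha> t s)
          = (u/s) * (u/s) * s\<^sup>2 + (u/s) * (v/s) * (r * s\<^sup>2) + (v/s) * (u/s) * (r * s\<^sup>2) + (v/s) * (v/s) * s\<^sup>2"
      proof -
        have "c (-\<delta>) = u / s" "c \<delta> = v / s" using neq unfolding c_def by auto
        then show ?thesis using neq by (simp add: cov1 cov2)
      qed
      also have "\<dots> = u\<^sup>2 + v\<^sup>2 + 2 * r * u * v" using s0 by (simp add: field_simps power2_eq_square)
      finally have e2: "(\<Sum>t\<in>{-\<delta>, \<delta>}. \<Sum>s\<in>{-\<delta>, \<delta>}. c t * c s * fbm_cov \<alpha> t s) = u\<^sup>2 + v\<^sup>2 + 2 * r * u * v" .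
      show ?thesis using cg_mgf[OF P cg] unfolding e2 by (simp only: e1)
    qed
    define A where "A = {\<omega>\<in>space M. X \<omega> < -1 \<and> Y \<omega> < -1}"
    have pA: "p \<le> measure M A" unfolding A_def p_def
      by (rule quadrant_lower[OF P Xm Ym mgf r0])
    define Cs where "Cs = {\<omega>\<in>space M. \<eta> \<omega> < lam * sqrt 2 * s}"
    have Av: "A \<in> sets (vimage_algebra (space M) (\<lambda>\<omega> t. B t \<omega>) (PiM UNIV (\<lambda>_. borel)))"
    proof -
      have "A = {\<omega>\<in>space M. (\<lambda>f. f (-\<delta>) / s < -1 \<and> f \<delta> / s < -1) (\<lambda>t. B t \<omega>)}"
        unfolding A_def X_def Y_def by simp
      also have "\<dots> \<in> sets (vimage_algebra (space M) (\<lambda>\<omega> t. B t \<omega>) (PiM UNIV (\<lambda>_. borel)))"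
        by (rule vimage_set_mem[OF PN]) measurable
      finally show ?thesis .
    qed
    have Cv: "Cs \<in> sets (vimage_algebra (space M) \<eta> borel)"
      unfolding Cs_def by (rule vimage_set_mem[OF etaN]) measurable
    have indAC: "prob (A \<inter> Cs) = prob A * prob Cs"
      by (rule indep_setD[OF ind Av Cv])
    define y where "y = lam * sqrt 2 * s / 2"
    have y0: "0 \<le> y" "y \<le> 1" using lam s0 s2 unfolding y_def by auto
    have "prob {\<omega>\<in>space M. \<eta> \<omega> \<le> y} = 1 - exp (- y * 1)"
      by (rule exponential_distributedD_le[OF D y0(1)]) simp
    moreover have "prob {\<omega>\<in>space M. \<eta> \<omega> \<le> y} \<le> prob Cs"
    proof (intro finite_measure_mono)
      have "0 < lam * sqrt 2 * s" using lam s0 by simp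
      then show "{\<omega>\<in>space M. \<eta> \<omega> \<le> y} \<subseteq> Cs" unfolding Cs_def y_def by auto
      show "Cs \<in> sets M" unfolding Cs_def by measurable
    qed
    moreover have "y / 2 \<le> 1 - exp (- y)"
    proof -
      have "1 + y \<le> exp y" by (rule exp_ge_add_one_self)
      then have "exp (- y) \<le> 1 / (1 + y)" using y0 by (simp add: exp_minus field_simps)
      also have "1 / (1 + y) \<le> 1 - y / 2" using y0 by (simp add: field_simps) (simp add: algebra_simps power2_eq_square mult_left_le)
      finally show ?thesis by simp
    qed
    ultimately have pC: "y / 2 \<le> prob Cs" by simp
    define E where "E = {\<omega> \<in> space M. Zproc \<alpha> B (-\<delta>) \<omega> + \<eta> \<omega> / lam < 0 \<and> Zproc \<alpha> B \<delta> \<omega> + \<eta> \<omega> / lam < 0}"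
    have qE: "qprob M \<alpha> B \<eta> \<delta> lam = prob E" unfolding qprob_def E_def ..
    have Em: "E \<in> sets M" unfolding E_def Zproc_def by measurable
    have "A \<inter> Cs \<subseteq> E"
    proof
      fix \<omega> assume w: "\<omega> \<in> A \<inter> Cs"
      then have b1: "B (-\<delta>) \<omega> < - s" "B \<delta> \<omega> < - s" and eta: "\<eta> \<omega> < lam * sqrt 2 * s" "\<omega> \<in> space M"
        using s0 unfolding A_def Cs_def X_def Y_def by (auto simp: field_simps)
      have e': "\<eta> \<omega> / lam < sqrt 2 * s" using eta lam by (simp add: field_simps)
      have "sqrt 2 * B (-\<delta>) \<omega> < sqrt 2 * (-s)" "sqrt 2 * B \<delta> \<omega> < sqrt 2 * (-s)"
        using mult_strict_left_mono[OF b1(1), of "sqrt 2"] mult_strict_left_mono[OF b1(2), of "sqrt 2"] by auto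
      moreover have "0 \<le> \<bar>-\<delta>\<bar> powr \<alpha>" "0 \<le> \<bar>\<delta>\<bar> powr \<alpha>" by (rule powr_ge_zero)+
      ultimately have "sqrt 2 * B (-\<delta>) \<omega> - \<bar>-\<delta>\<bar> powr \<alpha> + \<eta> \<omega> / lam < 0"
          "sqrt 2 * B \<delta> \<omega> - \<bar>\<delta>\<bar> powr \<alpha> + \<eta> \<omega> / lam < 0" using e' by linarith+
      then show "\<omega> \<in> E" unfolding E_def Zproc_def using eta(2) by blast
    qed
    then have "prob (A \<inter> Cs) \<le> prob E" using Em by (intro finite_measure_mono)
    then have "prob A * prob Cs \<le> prob E" unfolding indAC .
    then have "p * (y / 2) \<le> prob E"
    proof -
      have "p * (y / 2) \<le> prob A * prob Cs"
        using pA pC p0 y0 by (intro mult_mono) auto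
      then show ?thesis using \<open>prob A * prob Cs \<le> prob E\<close> by linarith
    qed
    then have low: "C0 * s \<le> prob E" unfolding C0_def y_def by (simp add: field_simps)
    define F where "F = (\<lambda>\<omega>. exp (lam * s) * exp (0 * X \<omega> + (- (lam * sqrt 2)) * Y \<omega>))"
    define G where "G = (\<lambda>\<omega>. exp (- (1/s) * \<eta> \<omega>))"
    have iF: "integrable M F" and eF: "(\<integral>\<omega>. F \<omega> \<partial>M) = exp (lam * s) * exp (lam\<^sup>2)"
      using mgf[of 0 "- (lam * sqrt 2)"] unfolding F_def by (auto simp: power2_eq_square)
    have iG: "integrable M G" and eG: "(\<integral>\<omega>. G \<omega> \<partial>M) = 1 / (1 + 1/s)"
      using exp_neg_mgf[OF P D, of "1/s"] s0 unfolding G_def by auto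
    have indFG: "indep_var borel F borel G"
    proof -
      have "indep_var borel (\<lambda>\<omega>. (\<lambda>f. exp (lam * s) * exp (0 * (f (-\<delta>) / s) + (- (lam * sqrt 2)) * (f \<delta> / s))) (\<lambda>t. B t \<omega>))
          borel (\<lambda>\<omega>. (\<lambda>x. exp (- (1/s) * x)) (\<eta> \<omega>))"
        by (rule indep_var_from[OF P ind PN etaN]) measurable
      then show ?thesis unfolding F_def G_def X_def Y_def by simp
    qed
    have iFG: "integrable M (\<lambda>\<omega>. F \<omega> * G \<omega>)" by (rule indep_var_integrable[OF indFG iF iG])
    have eFG: "(\<integral>\<omega>. F \<omega> * G \<omega> \<partial>M) = exp (lam * s) * exp (lam\<^sup>2) * (1 / (1 + 1/s))"
      using indep_var_lebesgue_integral[OF indFG iF iG] eF eG by simp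
    have iE: "integrable M (indicator E :: 'a \<Rightarrow> real)"
      by (intro integrable_real_indicator Em) (simp add: less_top[symmetric])
    have pw: "indicator E \<omega> \<le> F \<omega> * G \<omega>" if w: "\<omega> \<in> space M" for \<omega>
    proof (cases "\<omega> \<in> E")
      case True
      then have "sqrt 2 * B \<delta> \<omega> - \<bar>\<delta>\<bar> powr \<alpha> + \<eta> \<omega> / lam < 0" unfolding E_def Zproc_def by auto
      then have h: "lam * (sqrt 2 * B \<delta> \<omega>) - lam * s\<^sup>2 + \<eta> \<omega> < 0"
        using lam d0 ss by (simp add: field_simps)
      have "F \<omega> * G \<omega> = exp ((lam * s\<^sup>2 - lam * sqrt 2 * B \<delta> \<omega> - \<eta> \<omega>) / s)"
        unfolding F_def G_def Y_def using s0 by (simp add: exp_add[symmetric] field_simps power2_eq_square)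
      also have "\<dots> \<ge> 1" using h s0 by (simp add: algebra_simps)
      finally show ?thesis using True by simp
    next
      case False then show ?thesis unfolding F_def G_def by simp
    qed
    have "prob E = (\<integral>\<omega>. indicator E \<omega> \<partial>M)" using Em by (simp add: sets.Int_space_eq2)
    also have "\<dots> \<le> (\<integral>\<omega>. F \<omega> * G \<omega> \<partial>M)" by (rule integral_mono[OF iE iFG pw])
    also have "\<dots> = exp (lam * s + lam\<^sup>2) * (s / (s + 1))"
      unfolding eFG using s0 by (simp add: exp_add field_simps)
    also have "\<dots> \<le> C1 * s"
    proof -
      have "exp (lam * s + lam\<^sup>2) \<le> C1" unfolding C1_def using s1 lam by (simp add: mult_left_le)
      moreover have "s / (s + 1) \<le> s" using s0 by (simp add: field_simps)
      moreover have "0 \<le> C1" unfolding C1_def by simp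
      ultimately show ?thesis using s0 by (intro mult_mono) auto
    qed
    finally have up: "prob E \<le> C1 * s" .
    show ?thesis using low up qE unfolding s_def by simp
  qed
  have "C0 > 0" unfolding C0_def using p0 lam by simp
  moreover have "C1 > 0" unfolding C1_def by simp
  moreover have "\<forall>\<^sub>F \<delta> in at_right 0. C0 * \<delta> powr (\<alpha> / 2) \<le> qprob M \<alpha> B \<eta> \<delta> lam \<and>
           qprob M \<alpha> B \<eta> \<delta> lam \<le> C1 * \<delta> powr (\<alpha> / 2)"
    using eventually_small_powr[OF a0 b0] by (rule eventually_mono) (use main in blast)
  ultimately show "\<exists>C0>0. \<exists>C1>0. \<forall>\<^sub>F \<delta> in at_right 0. C0 * \<delta> powr (\<alpha> / 2) \<le> qprob M \<alpha> B \<eta> \<delta> lam \<and>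
           qprob M \<alpha> B \<eta> \<delta> lam \<le> C1 * \<delta> powr (\<alpha> / 2)" by blast
qed

end
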